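(* Let $\mathcal K$ be an even normalized kernel with $3\le\mathfrak m_4$, let $w_1,w_2>0$, $u_1\le u_2$ real and $\sigma>0$, and set $$\tilde u=\frac{w_1u_1+w_2u_2}{w_1+w_2}+\frac{4(\mathfrak m_4-3)\sigma^2(w_1-w_2)(u_1-u_2)}{(w_1+w_2)[(u_1-u_2)^2+2(\mathfrak m_4-3)\sigma^2]}$$ (the second term being $0$ when $u_1=u_2$), and $g(u)=(u-u_1)^2(u-u_2)^2(u-\tilde u)$. If the constants $c_1,c_2$ satisfy $c_1>0$ and $0<c_2<\frac56c_1^2$, then for every $s>0$ the polynomial $$h(u;s)=g(u)-c_1s\,g^{(2)}(u)+c_2s^2g^{(4)}(u)$$ has $5$ distinct real roots.
   Context: $\mathcal K:\mathbb R\to[0,\infty)$ is a kernel with $\mathfrak m_j:=\int_{\mathbb R}\xi^j\mathcal K(\xi)\,d\xi<\infty$ for all $j$, normalized so that $\mathfrak m_0=1,\mathfrak m_1=0,\mathfrak m_2=1$; $g^{(k)}$ denotes the $k$-th derivative of $g$ in $u$. *)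

theory Defs
  imports "HOL-Analysis.Analysis" "HOL-Computational_Algebra.Polynomial"
begin

definition kmoment :: "(real \<Rightarrow> real) \<Rightarrow> nat \<Rightarrow> real" where
  "kmoment K j = (LINT x|lborel. x ^ j * K x)"

definition normalized_kernel :: "(real \<Rightarrow> real) \<Rightarrow> bool" where
  "normalized_kernel K \<longleftrightarrow>
     (\<forall>x. 0 \<le> K x) \<and>
     (\<forall>j. integrable lborel (\<lambda>x. x ^ j * K x)) \<and>
     kmoment K 0 = 1 \<and> kmoment K 1 = 0 \<and> kmoment K 2 = 1"

definition even_kernel :: "(real \<Rightarrow> real) \<Rightarrow> bool" where
  "even_kernel K \<longleftrightarrow> (\<forall>x. K (- x) = K x)"

definition tilde_u :: "real \<Rightarrow> real \<Rightarrow> real \<Rightarrow> real \<Rightarrow> real \<Rightarrow> real \<Rightarrow> real" where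
  "tilde_u m4 w1 w2 u1 u2 \<sigma> =
     (w1 * u1 + w2 * u2) / (w1 + w2)
     + (if u1 = u2 then 0 else
        4 * (m4 - 3) * \<sigma>^2 * (w1 - w2) * (u1 - u2)
        / ((w1 + w2) * ((u1 - u2)^2 + 2 * (m4 - 3) * \<sigma>^2)))"

end

theory Submission
  imports Defs
begin

lemma gexp: "[:- a, 1:] ^ 2 * [:- b, 1:] ^ 2 * [:- t, 1:] =
  [: -(a^2*b^2*t), a^2*b^2 + 2*a*b*t*(a+b), -(2*a*b*(a+b) + t*(a^2+4*a*b+b^2)),
     a^2+4*a*b+b^2 + 2*t*(a+b), -(2*(a+b)+t), (1::real) :]"
  by (simp add: power2_eq_square algebra_simps)

lemma hexp:
  fixes a b t S K :: real
  shows "poly ([: -(a^2*b^2*t), a^2*b^2 + 2*a*b*t*(a+b), -(2*a*b*(a+b) + t*(a^2+4*a*b+b^2)),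
     a^2+4*a*b+b^2 + 2*t*(a+b), -(2*(a+b)+t), (1::real) :]
   - smult S ((pderiv ^^ 2) [: -(a^2*b^2*t), a^2*b^2 + 2*a*b*t*(a+b), -(2*a*b*(a+b) + t*(a^2+4*a*b+b^2)),
     a^2+4*a*b+b^2 + 2*t*(a+b), -(2*(a+b)+t), (1::real) :])
   + smult K ((pderiv ^^ 4) [: -(a^2*b^2*t), a^2*b^2 + 2*a*b*t*(a+b), -(2*a*b*(a+b) + t*(a^2+4*a*b+b^2)),
     a^2+4*a*b+b^2 + 2*t*(a+b), -(2*(a+b)+t), (1::real) :])) ((a+b)/2 + y)
   = (y^5 - (2*((b-a)/2)^2 + 20*S)*y^3 + (((b-a)/2)^4 + 12*S*((b-a)/2)^2 + 120*K)*y)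
     - (t - (a+b)/2) * (y^4 - (2*((b-a)/2)^2 + 12*S)*y^2 + (((b-a)/2)^4 + 4*S*((b-a)/2)^2 + 24*K))"
  apply (simp add: pderiv_pCons numeral_eq_Suc)
  by (simp add: field_simps)

lemma key:
  fixes d c S K :: real
  assumes S: "S > 0" and K: "K > 0" and KS: "K < 5/6 * S^2"
  defines "F \<equiv> \<lambda>y. (y^5 - (2*d^2 + 20*S)*y^3 + (d^4 + 12*S*d^2 + 120*K)*y)
     - c * (y^4 - (2*d^2 + 12*S)*y^2 + (d^4 + 4*S*d^2 + 24*K))"
  shows "\<exists>q1 q2 q3 q4. q1 < q2 \<and> q2 < q3 \<and> q3 < q4 \<and> F q1 > 0 \<and> F q2 < 0 \<and> F q3 > 0 \<and> F q4 < 0"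
proof -
  have Sd: "S*d^2 \<ge> 0" using S by simp
  have S2: "S^2 > 0" using S by simp
  have d4: "d^4 \<ge> 0" by (simp add: zero_le_even_power)
  define X where "X = 8*S*d^2 + 36*S^2 - 24*K"
  have X16: "X > 16*S^2" using KS Sd unfolding X_def by linarith
  have Xpos: "X > 0" using X16 S2 by linarith
  define r where "r = sqrt X"
  have r2: "r^2 = X" using Xpos r_def by simp
  have rpos: "r > 0" using Xpos r_def by simp
  have r4: "r > 4*S"
  proof -
    have "(4*S)^2 < r^2" using r2 X16 by (simp add: power_mult_distrib)
    thus ?thesis using rpos power_less_imp_less_base[of "4*S" 2 r] by linarith
  qed
  define bp where "bp = d^2 + 6*S + r"
  define bm where "bm = d^2 + 6*S - r"
  have bm_pos: "bm > 0"
  proof -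
    have e: "(d^2+6*S)^2 = d^4 + 12*(S*d^2) + 36*S^2" by algebra
    have "r^2 < (d^2+6*S)^2" unfolding e r2 X_def using Sd d4 K by linarith
    hence "r < d^2 + 6*S" using S power_less_imp_less_base[of r 2 "d^2+6*S"] by (simp add: add_nonneg_nonneg)
    thus ?thesis unfolding bm_def by simp
  qed
  have bmp: "bm < bp" unfolding bm_def bp_def using rpos by simp
  have Bz: "z^2 - (2*d^2 + 12*S)*z + (d^4 + 4*S*d^2 + 24*K) = 0" if "z = bp \<or> z = bm" for z
  proof -
    have sq: "(z - (d^2+6*S))^2 = r^2" using that unfolding bp_def bm_def by auto
    have "z^2 - (2*d^2 + 12*S)*z + (d^4 + 4*S*d^2 + 24*K)
       = (z - (d^2+6*S))^2 - (8*S*d^2 + 36*S^2 - 24*K)" by algebra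
    thus ?thesis unfolding sq r2 X_def by simp
  qed
  have Fq: "F q = 8*q*(S*d^2 + 12*K - S*z)" if "q^2 = z" "z = bp \<or> z = bm" for q z
  proof -
    have b0: "z^2 - (2*d^2 + 12*S)*z + (d^4 + 4*S*d^2 + 24*K) = 0" using Bz that(2) .
    have e4: "q^4 = (q^2)^2" "q^5 = q*(q^2)^2" "q^3 = q*q^2" by algebra+
    have q4: "q^4 = z^2" using e4(1) unfolding that(1) .
    have q5: "q^5 = q*z^2" using e4(2) unfolding that(1) .
    have q3: "q^3 = q*z" using e4(3) unfolding that(1) .
    have "F q = (q*z^2 - (2*d^2 + 20*S)*(q*z) + (d^4 + 12*S*d^2 + 120*K)*q)
     - c * (z^2 - (2*d^2 + 12*S)*z + (d^4 + 4*S*d^2 + 24*K))"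
      unfolding F_def q5 q4 q3 that(1) by simp
    also have "\<dots> = q*(z^2 - (2*d^2 + 12*S)*z + (d^4 + 4*S*d^2 + 24*K)) + 8*q*(S*d^2 + 12*K - S*z)
         - c * (z^2 - (2*d^2 + 12*S)*z + (d^4 + 4*S*d^2 + 24*K))" by algebra
    also have "\<dots> = 8*q*(S*d^2 + 12*K - S*z)" unfolding b0 by simp
    finally show ?thesis .
  qed
  have Sr: "S*r > S*(4*S)" using r4 S by (rule mult_strict_left_mono)
  have negp: "S*d^2 + 12*K - S*bp < 0"
  proof -
    have "S*d^2 + 12*K - S*bp = 12*K - 6*S^2 - S*r" unfolding bp_def by algebra
    moreover have "S*(4*S) = 4*S^2" by algebra
    ultimately show ?thesis using Sr KS by linarith
  qed
  have posm: "S*d^2 + 12*K - S*bm > 0"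
  proof -
    have e: "S*d^2 + 12*K - S*bm = 12*K - 6*S^2 + S*r" unfolding bm_def by algebra
    show ?thesis
    proof (cases "6*S^2 - 12*K \<le> 0")
      case True
      have "S*r > 0" using S rpos by simp
      thus ?thesis unfolding e using True by linarith
    next
      case False
      have k1: "K*(5*S^2 - 6*K) > 0" using K KS by (intro mult_pos_pos) auto
      have k2: "S^3*d^2 \<ge> 0" using S by simp
      have "(S*r)^2 - (6*S^2 - 12*K)^2 = 8*(S^3*d^2) + 24*(K*(5*S^2 - 6*K))"
        unfolding power_mult_distrib r2 X_def by algebra
      hence "(6*S^2 - 12*K)^2 < (S*r)^2" using k1 k2 by linarith
      hence "6*S^2 - 12*K < S*r" using S rpos power_less_imp_less_base[of "6*S^2 - 12*K" 2 "S*r"] by simp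
      thus ?thesis unfolding e by simp
    qed
  qed
  have sbp: "sqrt bp > 0" "sqrt bm > 0" using bm_pos bmp by auto
  have sl: "sqrt bm < sqrt bp" using bmp by simp
  have bpp: "bp > 0" using bm_pos bmp by simp
  show ?thesis
  proof (intro exI conjI)
    show "- sqrt bp < - sqrt bm" using sl by simp
    show "- sqrt bm < sqrt bm" using sbp by simp
    show "sqrt bm < sqrt bp" by (rule sl)
    have m1: "sqrt bp * (S*d^2 + 12*K - S*bp) < 0" using sbp(1) negp by (rule mult_pos_neg)
    have m2: "sqrt bm * (S*d^2 + 12*K - S*bm) > 0" using sbp(2) posm by (rule mult_pos_pos)
    have f1: "F (- sqrt bp) = -8 * (sqrt bp * (S*d^2 + 12*K - S*bp))" using Fq[of "- sqrt bp" bp] bpp by simp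
    have f2: "F (- sqrt bm) = -8 * (sqrt bm * (S*d^2 + 12*K - S*bm))" using Fq[of "- sqrt bm" bm] bm_pos by simp
    have f3: "F (sqrt bm) = 8 * (sqrt bm * (S*d^2 + 12*K - S*bm))" using Fq[of "sqrt bm" bm] bm_pos by simp
    have f4: "F (sqrt bp) = 8 * (sqrt bp * (S*d^2 + 12*K - S*bp))" using Fq[of "sqrt bp" bp] bpp by simp
    show "F (- sqrt bp) > 0" using f1 m1 by linarith
    show "F (- sqrt bm) < 0" using f2 m2 by linarith
    show "F (sqrt bm) > 0" using f3 m2 by linarith
    show "F (sqrt bp) < 0" using f4 m1 by linarith
  qed
qed

lemma neg_abs_mult: "(0::real) \<le> w \<Longrightarrow> -\<bar>a\<bar>*w \<le> a*w"
  by (intro mult_right_mono) (cases "a \<ge> 0", auto)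

lemma quintic_pos:
  fixes a0 a1 a2 a3 a4 :: real
  shows "\<exists>R. \<forall>y\<ge>R. y^5 + a4*y^4 + a3*y^3 + a2*y^2 + a1*y + a0 > 0"
proof (intro exI allI impI)
  fix y :: real
  define R where "R = 1 + \<bar>a4\<bar> + \<bar>a3\<bar> + \<bar>a2\<bar> + \<bar>a1\<bar> + \<bar>a0\<bar>"
  assume y: "y \<ge> R"
  have y1: "y \<ge> 1" using y unfolding R_def by linarith
  have p0: "1 \<le> y^4" using y1 by (simp add: one_le_power)
  have p1: "y \<le> y^4" using power_increasing[of 1 4 y] y1 by simp
  have p2: "y^2 \<le> y^4" using power_increasing[of 2 4 y] y1 by simp
  have p3: "y^3 \<le> y^4" using power_increasing[of 3 4 y] y1 by simp
  have y4: "y^4 > 0" using y1 by simp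
  have t4: "a4*y^4 \<ge> -\<bar>a4\<bar>*y^4" using y4 by (intro neg_abs_mult) simp
  have t3: "a3*y^3 \<ge> -\<bar>a3\<bar>*y^4"
  proof -
    have "a3*y^3 \<ge> -\<bar>a3\<bar>*y^3" using y1 by (intro neg_abs_mult) simp
    moreover have "\<bar>a3\<bar>*y^3 \<le> \<bar>a3\<bar>*y^4" using p3 by (simp add: mult_left_mono)
    ultimately show ?thesis by simp
  qed
  have t2: "a2*y^2 \<ge> -\<bar>a2\<bar>*y^4"
  proof -
    have "a2*y^2 \<ge> -\<bar>a2\<bar>*y^2" by (intro neg_abs_mult) simp
    moreover have "\<bar>a2\<bar>*y^2 \<le> \<bar>a2\<bar>*y^4" using p2 by (simp add: mult_left_mono)
    ultimately show ?thesis by simp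
  qed
  have t1: "a1*y \<ge> -\<bar>a1\<bar>*y^4"
  proof -
    have "a1*y \<ge> -\<bar>a1\<bar>*y" using y1 by (intro neg_abs_mult) simp
    moreover have "\<bar>a1\<bar>*y \<le> \<bar>a1\<bar>*y^4" using p1 by (simp add: mult_left_mono)
    ultimately show ?thesis by simp
  qed
  have t0: "a0 \<ge> -\<bar>a0\<bar>*y^4"
  proof -
    have "\<bar>a0\<bar>*1 \<le> \<bar>a0\<bar>*y^4" using mult_left_mono[OF p0, of "\<bar>a0\<bar>"] by simp
    thus ?thesis by simp
  qed
  have t5: "y^5 \<ge> R*y^4"
  proof -
    have "y^5 = y*y^4" by (simp add: power_Suc[symmetric] del: power_Suc)
    thus ?thesis using y y4 by (simp add: mult_right_mono)
  qed
  have "R*y^4 = y^4 + \<bar>a4\<bar>*y^4 + \<bar>a3\<bar>*y^4 + \<bar>a2\<bar>*y^4 + \<bar>a1\<bar>*y^4 + \<bar>a0\<bar>*y^4"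
    unfolding R_def by (simp add: algebra_simps)
  thus "y^5 + a4*y^4 + a3*y^3 + a2*y^2 + a1*y + a0 > 0" using t0 t1 t2 t3 t4 t5 y4 by linarith
qed

lemma root_between:
  fixes F :: "real \<Rightarrow> real"
  assumes "continuous_on UNIV F" "a < b" "F a * F b < 0"
  shows "\<exists>x. a < x \<and> x < b \<and> F x = 0"
proof -
  have c: "continuous_on {a..b} F" using assms(1) by (rule continuous_on_subset) auto
  have "\<exists>x. a \<le> x \<and> x \<le> b \<and> F x = 0"
  proof (cases "F a < 0")
    case True
    hence "F b > 0" using assms(3) by (smt (verit) mult_nonpos_nonpos)
    thus ?thesis using IVT'[of F a 0 b] True assms(2) c by auto
  next
    case False
    hence "F a > 0" "F b < 0" using assms(3) by (auto simp: mult_less_0_iff)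
    thus ?thesis using IVT2'[of F b 0 a] assms(2) c by auto
  qed
  then obtain x where "a \<le> x" "x \<le> b" "F x = 0" by blast
  moreover have "x \<noteq> a" "x \<noteq> b" using \<open>F x = 0\<close> assms(3) by auto
  ultimately show ?thesis by (intro exI[of _ x]) (auto simp: order.order_iff_strict)
qed

theorem proposition4p3:
  fixes K :: "real \<Rightarrow> real"
    and w1 w2 u1 u2 \<sigma> c1 c2 s :: real
    and g h :: "real poly"
  assumes "normalized_kernel K" and "even_kernel K" and "3 \<le> kmoment K 4"
    and "w1 > 0" and "w2 > 0" and "u1 \<le> u2" and "\<sigma> > 0"
    and "g = [:- u1, 1:] ^ 2 * [:- u2, 1:] ^ 2
             * [:- tilde_u (kmoment K 4) w1 w2 u1 u2 \<sigma>, 1:]"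
    and "c1 > 0" and "0 < c2" and "c2 < 5 / 6 * c1 ^ 2"
    and "s > 0"
    and "h = g - smult (c1 * s) ((pderiv ^^ 2) g) + smult (c2 * s ^ 2) ((pderiv ^^ 4) g)"
  shows "card {u :: real. poly h u = 0} = 5"
proof -
  define T where "T = tilde_u (kmoment K 4) w1 w2 u1 u2 \<sigma>"
  define S where "S = c1 * s"
  define KK where "KK = c2 * s^2"
  define M where "M = (u1 + u2) / 2"
  define d where "d = (u2 - u1) / 2"
  define c where "c = T - M"
  define F where "F = (\<lambda>y::real. (y^5 - (2*d^2 + 20*S)*y^3 + (d^4 + 12*S*d^2 + 120*KK)*y)
     - c * (y^4 - (2*d^2 + 12*S)*y^2 + (d^4 + 4*S*d^2 + 24*KK)))"
  have gl: "g = [: -(u1^2*u2^2*T), u1^2*u2^2 + 2*u1*u2*T*(u1+u2), -(2*u1*u2*(u1+u2) + T*(u1^2+4*u1*u2+u2^2)),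
     u1^2+4*u1*u2+u2^2 + 2*T*(u1+u2), -(2*(u1+u2)+T), (1::real) :]"
    unfolding assms(8) T_def[symmetric] by (rule gexp)
  have PF: "poly h (M + y) = F y" for y
    unfolding assms(13) gl S_def[symmetric] KK_def[symmetric] M_def F_def d_def c_def
    by (rule hexp)
  have Spos: "S > 0" unfolding S_def using assms by simp
  have Kpos: "KK > 0" unfolding KK_def using assms by simp
  have KS: "KK < 5/6 * S^2" unfolding KK_def S_def using assms(11) assms(12)
    by (simp add: power_mult_distrib)
  obtain q1 q2 q3 q4 where q: "q1 < q2" "q2 < q3" "q3 < q4" "F q1 > 0" "F q2 < 0" "F q3 > 0" "F q4 < 0"
    using key[OF Spos Kpos KS, of d c] unfolding F_def by blast
  obtain N where N: "\<And>y. y \<ge> N \<Longrightarrow> F y > 0"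
  proof -
    obtain R where R: "\<forall>y\<ge>R. y^5 + (-c)*y^4 + (-(2*d^2 + 20*S))*y^3 + (c*(2*d^2 + 12*S))*y^2
        + (d^4 + 12*S*d^2 + 120*KK)*y + (-(c*(d^4 + 4*S*d^2 + 24*KK))) > 0"
      using quintic_pos by blast
    have "F y = y^5 + (-c)*y^4 + (-(2*d^2 + 20*S))*y^3 + (c*(2*d^2 + 12*S))*y^2
        + (d^4 + 12*S*d^2 + 120*KK)*y + (-(c*(d^4 + 4*S*d^2 + 24*KK)))" for y
      unfolding F_def by algebra
    thus ?thesis using R that by auto
  qed
  obtain L where L: "\<And>y. y \<le> L \<Longrightarrow> F y < 0"
  proof -
    obtain R where R: "\<forall>z\<ge>R. z^5 + c*z^4 + (-(2*d^2 + 20*S))*z^3 + (-(c*(2*d^2 + 12*S)))*z^2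
        + (d^4 + 12*S*d^2 + 120*KK)*z + c*(d^4 + 4*S*d^2 + 24*KK) > 0"
      using quintic_pos by blast
    have e: "F (-z) = -(z^5 + c*z^4 + (-(2*d^2 + 20*S))*z^3 + (-(c*(2*d^2 + 12*S)))*z^2
        + (d^4 + 12*S*d^2 + 120*KK)*z + c*(d^4 + 4*S*d^2 + 24*KK))" for z
      unfolding F_def by algebra
    have "F y < 0" if "y \<le> -R" for y
    proof -
      have my: "-y \<ge> R" using that by simp
      note p = R[rule_format, OF my]
      have "F y = F (- (- y))" by simp
      note e2 = e[of "-y", folded this]
      show ?thesis using p e2 by linarith
    qed
    thus ?thesis using that by blast
  qed
  define q0 where "q0 = min L (q1 - 1)"
  define q5 where "q5 = max N (q4 + 1)"
  have q0: "q0 < q1" "F q0 < 0" using L unfolding q0_def by auto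
  have q5: "q4 < q5" "F q5 > 0" using N unfolding q5_def by auto
  have cF: "continuous_on UNIV F" unfolding F_def by (intro continuous_intros)
  obtain y1 where y1: "q0 < y1" "y1 < q1" "F y1 = 0"
    using root_between[OF cF q0(1)] q0 q by (auto simp: mult_neg_pos)
  obtain y2 where y2: "q1 < y2" "y2 < q2" "F y2 = 0"
    using root_between[OF cF q(1)] q by (auto simp: mult_pos_neg)
  obtain y3 where y3: "q2 < y3" "y3 < q3" "F y3 = 0"
    using root_between[OF cF q(2)] q by (auto simp: mult_neg_pos)
  obtain y4 where y4: "q3 < y4" "y4 < q4" "F y4 = 0"
    using root_between[OF cF q(3)] q by (auto simp: mult_pos_neg)
  obtain y5 where y5: "q4 < y5" "y5 < q5" "F y5 = 0"
    using root_between[OF cF q5(1)] q5 q by (auto simp: mult_neg_pos)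
  have hnz: "h \<noteq> 0" using PF[of q1] q(4) by auto
  have fin: "finite {u. poly h u = 0}" using hnz by (rule poly_roots_finite)
  have degg: "degree g = 5" unfolding gl by simp
  have degh: "degree h \<le> 5" unfolding assms(13)
    by (intro degree_add_le degree_diff_le)
       (auto simp: degg degree_pderiv numeral_eq_Suc intro: order.trans[OF degree_smult_le])
  have ub: "card {u. poly h u = 0} \<le> 5"
    using card_poly_roots_bound[OF hnz] degh by linarith
  have sub: "{M+y1, M+y2, M+y3, M+y4, M+y5} \<subseteq> {u. poly h u = 0}"
    using PF y1 y2 y3 y4 y5 by auto
  have "card {M+y1, M+y2, M+y3, M+y4, M+y5} = 5"
    using y1 y2 y3 y4 y5 q by auto
  hence "5 \<le> card {u. poly h u = 0}" using card_mono[OF fin sub] by simp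
  thus ?thesis using ub by simp
qed

end
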